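(* Let $V:\mathbb{R}^n\to\mathbb{R}$ be measurable with $\sup V - \inf V \le c$ for some $c\ge 0$, and let $f = e^{-V}$ satisfy $\int f\,d\gamma = 1$. Then for every $t>0$, $f_t$ is $-\dfrac{e^{c}}{e^{2t}-1}$-log-concave.
   Context: $\gamma$ is the standard Gaussian measure on $\mathbb{R}^n$. For $t \ge 0$ and $f \in L^1(\gamma)$, the Ornstein–Uhlenbeck semigroup is $(P_t f)(x) = \mathbb{E}\, f(e^{-t}x + \sqrt{1-e^{-2t}}\,Z)$, where $Z$ is a standard Gaussian random vector in $\mathbb{R}^n$; write $f_t = P_t f$. For $\lambda\in\mathbb{R}$, a function $g:\mathbb{R}^n\to(0,\infty)$ is called $-\lambda$-log-concave if $x\mapsto \log g(x) - \lambda|x|^2/2$ is concave. *)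

theory Defs
  imports "HOL-Analysis.Analysis"
begin

definition gauss_density :: "'a::euclidean_space \<Rightarrow> real" where
  "gauss_density x = (2 * pi) powr (- real DIM('a) / 2) * exp (- (norm x)\<^sup>2 / 2)"

definition std_gaussian :: "'a::euclidean_space measure" where
  "std_gaussian = density lebesgue (\<lambda>x. ennreal (gauss_density x))"

definition OU :: "real \<Rightarrow> ('a::euclidean_space \<Rightarrow> real) \<Rightarrow> 'a \<Rightarrow> real" where
  "OU t f x = (\<integral>z. f (exp (- t) *\<^sub>R x + sqrt (1 - exp (- 2 * t)) *\<^sub>R z) \<partial>std_gaussian)"

text \<open>g is (-lam)-log-concave: g > 0 and x \<mapsto> log g x - lam |x|^2/2 is concave.\<close>
definition neg_log_concave :: "real \<Rightarrow> ('a::euclidean_space \<Rightarrow> real) \<Rightarrow> bool" where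
  "neg_log_concave lam g \<longleftrightarrow>
     (\<forall>x. 0 < g x) \<and> concave_on UNIV (\<lambda>x. ln (g x) - lam * (norm x)\<^sup>2 / 2)"

end

theory Submission
  imports Defs
begin


lemma mid_dyadic:
  fixes H :: "real \<Rightarrow> real"
  assumes mid: "\<And>u d. 2 * H u \<le> H (u + d) + H (u - d)"
  shows "H (u0 + d / 2^k) - H u0 \<le> (H (u0 + d) - H u0) / 2^k"
proof (induction k)
  case 0 then show ?case by simp
next
  case (Suc k)
  define q where "q = d / 2^k"
  have "2 * H (u0 + q/2) \<le> H (u0 + q/2 + q/2) + H (u0 + q/2 - q/2)" by (rule mid)
  moreover have "u0 + q/2 + q/2 = u0 + q" "u0 + q/2 - q/2 = u0" by simp_all
  ultimately have "H (u0 + q/2) - H u0 \<le> (H (u0 + q) - H u0) / 2" by simp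
  also have "\<dots> \<le> ((H (u0 + d) - H u0) / 2^k) / 2" using Suc.IH unfolding q_def by (intro divide_right_mono) auto
  finally show ?case by (simp add: q_def mult.commute)
qed

lemma mid_cont:
  fixes H :: "real \<Rightarrow> real"
  assumes mid: "\<And>u d. 2 * H u \<le> H (u + d) + H (u - d)"
    and bnd: "\<And>u. H u \<le> B + C * u^2"
  shows "isCont H u0"
proof -
  define K where "K = B + \<bar>C\<bar> * (\<bar>u0\<bar> + 1)^2 - H u0"
  have bd1: "H (u0 + d) - H u0 \<le> K" if "\<bar>d\<bar> \<le> 1" for d
  proof -
    have a1: "\<bar>u0+d\<bar> \<le> \<bar>u0\<bar> + 1" using that abs_triangle_ineq[of u0 d] by linarith
    have a2: "(u0+d)^2 \<le> (\<bar>u0\<bar> + 1)^2" using power_mono[OF a1, of 2] by simp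
    have a3: "C*(u0+d)^2 \<le> \<bar>C\<bar>*(u0+d)^2" by (simp add: mult_right_mono)
    have a4: "\<bar>C\<bar>*(u0+d)^2 \<le> \<bar>C\<bar>*(\<bar>u0\<bar> + 1)^2" using a2 by (simp add: mult_left_mono)
    have "C * (u0+d)^2 \<le> \<bar>C\<bar> * (\<bar>u0\<bar> + 1)^2" using a3 a4 by linarith
    then show ?thesis using bnd[of "u0+d"] unfolding K_def by linarith
  qed
  have K0: "0 \<le> K" using bd1[of 0] by simp
  have key: "\<bar>H (u0 + v) - H u0\<bar> \<le> K / 2^k" if "\<bar>v\<bar> \<le> 1 / 2^k" for v k
  proof -
    have up: "H (u0 + w) - H u0 \<le> K / 2^k" if "\<bar>w\<bar> \<le> 1 / 2^k" for w
    proof -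
      define d where "d = w * 2^k"
      have "\<bar>d\<bar> \<le> 1" using that by (simp add: d_def abs_mult field_simps)
      have "w = d / 2^k" by (simp add: d_def)
      then have "H (u0 + w) - H u0 \<le> (H (u0 + d) - H u0) / 2^k"
        using mid_dyadic[OF mid] by simp
      also have "\<dots> \<le> K / 2^k" using bd1[OF \<open>\<bar>d\<bar> \<le> 1\<close>] by (simp add: divide_right_mono)
      finally show ?thesis .
    qed
    have "H (u0 + v) - H u0 \<le> K / 2^k" using up that by simp
    moreover have "H (u0 - v) - H u0 \<le> K / 2^k" using up[of "-v"] that by simp
    moreover have "2 * H u0 \<le> H (u0 + v) + H (u0 - v)" by (rule mid)
    ultimately show ?thesis by linarith
  qed
  show ?thesis
    unfolding isCont_def LIM_eq
  proof (intro allI impI)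
    fix r :: real assume r: "0 < r"
    obtain k where k: "K / r < 2^k" using real_arch_pow[of 2 "K/r"] by auto
    have Kr: "K / 2^k < r" using k r by (simp add: field_simps)
    show "\<exists>s>0. \<forall>x. x \<noteq> u0 \<and> norm (x - u0) < s \<longrightarrow> norm (H x - H u0) < r"
    proof (intro exI[of _ "1/2^k"] conjI allI impI)
      fix x assume "x \<noteq> u0 \<and> norm (x - u0) < 1 / 2^k"
      then have "\<bar>x - u0\<bar> \<le> 1/2^k" by simp
      from key[OF this] Kr show "norm (H x - H u0) < r" by simp
    qed simp
  qed
qed

lemma mid_convex01:
  fixes H :: "real \<Rightarrow> real"
  assumes mid: "\<And>u d. 2 * H u \<le> H (u + d) + H (u - d)"
    and cont: "\<And>u. isCont H u"
    and th: "0 \<le> \<theta>" "\<theta> \<le> 1"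
  shows "H \<theta> \<le> (1 - \<theta>) * H 0 + \<theta> * H 1"
proof (rule ccontr)
  assume neg: "\<not> ?thesis"
  define \<phi> where "\<phi> u = H u - ((1 - u) * H 0 + u * H 1)" for u
  have phimid: "2 * \<phi> u \<le> \<phi> (u + d) + \<phi> (u - d)" for u d
    using mid[of u d] unfolding \<phi>_def by (simp add: algebra_simps)
  have phicont: "continuous_on {0..1} \<phi>"
    unfolding \<phi>_def by (intro continuous_intros continuous_at_imp_continuous_on ballI cont)
  obtain p0 where p0: "p0 \<in> {0..1}" "\<And>y. y \<in> {0..1} \<Longrightarrow> \<phi> y \<le> \<phi> p0"
    using continuous_attains_sup[OF compact_Icc _ phicont] by auto
  define M where "M = \<phi> p0"
  have Mpos: "0 < M" using p0(2)[of \<theta>] neg th unfolding M_def \<phi>_def by auto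
  define S where "S = {u \<in> {0..1}. \<phi> u = M}"
  have Sne: "S \<noteq> {}" using p0 unfolding S_def M_def by auto
  have Sclosed: "closed S"
  proof -
    have "S = {0..1} \<inter> \<phi> -` {M}" unfolding S_def by auto
    then show ?thesis
      using continuous_closed_preimage[OF phicont closed_atLeastAtMost, of "{M}"] by auto
  qed
  have Sbdd: "bdd_below S" unfolding S_def by (auto intro!: bdd_belowI[of _ 0])
  define p where "p = Inf S"
  have pS: "p \<in> S" unfolding p_def using closed_contains_Inf[OF Sne Sbdd Sclosed] .
  have p0': "p \<noteq> 0" "p \<noteq> 1" using pS Mpos unfolding S_def \<phi>_def by auto
  have p01: "0 < p" "p < 1" using pS p0' unfolding S_def by auto
  define d where "d = min p (1 - p)"
  have d: "0 < d" "0 \<le> p - d" "p + d \<le> 1" using p01 unfolding d_def by auto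
  have "\<phi> (p + d) \<le> M" using p0(2)[of "p+d"] d M_def p01 by auto
  moreover have "\<phi> (p - d) < M"
  proof -
    have "\<phi> (p - d) \<le> M" using p0(2)[of "p-d"] d M_def p01 by auto
    moreover have "p - d \<notin> S"
    proof
      assume "p - d \<in> S"
      then have "p \<le> p - d" unfolding p_def by (intro cInf_lower Sbdd)
      with d show False by simp
    qed
    then have "\<phi> (p - d) \<noteq> M" using d p01 unfolding S_def by auto
    ultimately show ?thesis by simp
  qed
  moreover have "\<phi> p = M" using pS unfolding S_def by auto
  ultimately show False using phimid[of p d] by simp
qed

lemma mid_concave:
  fixes G :: "'a::real_normed_vector \<Rightarrow> real"
  assumes mid: "\<And>x h. G (x + h) + G (x - h) \<le> 2 * G x"
    and lb: "\<And>x. B - C * (norm x)\<^sup>2 \<le> G x" and C: "0 \<le> C"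
  shows "concave_on UNIV G"
  unfolding concave_on_def
proof (rule convex_onI)
  fix t :: real and x y :: 'a
  assume t: "0 < t" "t < 1"
  define H where "H u = - G (x + u *\<^sub>R (y - x))" for u
  have Hmid: "2 * H u \<le> H (u + d) + H (u - d)" for u d
  proof -
    have "x + (u + d) *\<^sub>R (y - x) = (x + u *\<^sub>R (y - x)) + d *\<^sub>R (y - x)"
      "x + (u - d) *\<^sub>R (y - x) = (x + u *\<^sub>R (y - x)) - d *\<^sub>R (y - x)"
      by (simp_all add: algebra_simps)
    note eqs = this
    show ?thesis using mid[of "x + u *\<^sub>R (y - x)" "d *\<^sub>R (y - x)"] unfolding H_def eqs by linarith
  qed
  have Hbnd: "H u \<le> (- B + 2 * C * (norm x)\<^sup>2) + (2 * C * (norm (y - x))\<^sup>2) * u^2" for u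
  proof -
    have n1: "norm (x + u *\<^sub>R (y - x)) \<le> norm x + \<bar>u\<bar> * norm (y - x)"
      using norm_triangle_ineq[of x "u *\<^sub>R (y - x)"] by simp
    have n2: "(norm (x + u *\<^sub>R (y - x)))\<^sup>2 \<le> (norm x + \<bar>u\<bar> * norm (y - x))\<^sup>2"
      using power_mono[OF n1, of 2] by simp
    have n3: "(norm x + \<bar>u\<bar> * norm (y - x))\<^sup>2 \<le> 2 * (norm x)\<^sup>2 + 2 * (norm (y - x))\<^sup>2 * u^2"
    proof -
      have "0 \<le> (norm x - \<bar>u\<bar> * norm (y - x))\<^sup>2" by simp
      then show ?thesis by (simp add: power2_eq_square algebra_simps)
    qed
    have "C * (norm (x + u *\<^sub>R (y - x)))\<^sup>2 \<le> C * (2 * (norm x)\<^sup>2 + 2 * (norm (y - x))\<^sup>2 * u^2)"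
      using mult_left_mono[OF order_trans[OF n2 n3] C] .
    then show ?thesis using lb[of "x + u *\<^sub>R (y - x)"] unfolding H_def by (simp add: algebra_simps)
  qed
  have Hc: "isCont H u" for u by (rule mid_cont[OF Hmid Hbnd])
  have "H t \<le> (1 - t) * H 0 + t * H 1"
    by (rule mid_convex01[OF Hmid Hc]) (use t in auto)
  moreover have "x + t *\<^sub>R (y - x) = (1 - t) *\<^sub>R x + t *\<^sub>R y" by (simp add: algebra_simps)
  ultimately show "- G ((1 - t) *\<^sub>R x + t *\<^sub>R y) \<le> (1 - t) * - G x + t * - G y"
    unfolding H_def by simp
qed simp



lemma leb_transl:
  fixes w :: "'a::euclidean_space"
  shows "distr lebesgue lebesgue (\<lambda>x. w + x) = lebesgue"
    and "(\<lambda>x. w + x) \<in> lebesgue \<rightarrow>\<^sub>M lebesgue"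
proof -
  have T: "(\<lambda>x. w + (\<Sum>j\<in>Basis. (1 * (x \<bullet> j)) *\<^sub>R j)) = (\<lambda>x::'a. w + x)"
    by (simp add: euclidean_representation)
  have "lebesgue = density (distr lebesgue lebesgue (\<lambda>x::'a. w + x)) (\<lambda>_. (\<Prod>j\<in>(Basis::'a set). \<bar>1::real\<bar>))"
    using lebesgue_affine_euclidean[of "\<lambda>_. 1" w] T by simp
  then show "distr lebesgue lebesgue (\<lambda>x. w + x) = lebesgue" by (simp add: density_1)
  show "(\<lambda>x. w + x) \<in> lebesgue \<rightarrow>\<^sub>M lebesgue"
    using lebesgue_affine_measurable[of "\<lambda>_. 1" w] T by simp
qed

lemma cont_meas:
  fixes f :: "'a::euclidean_space \<Rightarrow> real"
  assumes "continuous_on UNIV f"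
  shows "f \<in> borel_measurable lebesgue"
  using continuous_imp_measurable_on_sets_lebesgue[OF assms, of] lebesgue_on_UNIV_eq by fastforce

lemma gd_cont: "continuous_on UNIV (gauss_density :: 'a::euclidean_space \<Rightarrow> real)"
  unfolding gauss_density_def by (intro continuous_intros) auto

lemma gd_meas[measurable]: "gauss_density \<in> borel_measurable (lebesgue :: 'a::euclidean_space measure)"
  by (rule cont_meas[OF gd_cont])

lemma gd_nonneg: "0 \<le> gauss_density x"
  unfolding gauss_density_def by simp

lemma gd_shift:
  fixes z w :: "'a::euclidean_space"
  shows "gauss_density (z - w) = gauss_density z * exp (w \<bullet> z - (norm w)\<^sup>2 / 2)"
proof -
  have "(norm (z - w))\<^sup>2 = (norm z)\<^sup>2 - 2 * (w \<bullet> z) + (norm w)\<^sup>2"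
    by (simp add: power2_norm_eq_inner inner_diff inner_commute)
  then have "- (norm (z - w))\<^sup>2 / 2 = - (norm z)\<^sup>2 / 2 + (w \<bullet> z - (norm w)\<^sup>2 / 2)"
    by (simp add: field_simps)
  then have "exp (- (norm (z - w))\<^sup>2 / 2) = exp (- (norm z)\<^sup>2 / 2) * exp (w \<bullet> z - (norm w)\<^sup>2 / 2)"
    by (simp add: exp_add[symmetric])
  then show ?thesis unfolding gauss_density_def by simp
qed

lemma CM:
  fixes g :: "'a::euclidean_space \<Rightarrow> real" and w :: 'a
  assumes g[measurable]: "g \<in> borel_measurable lebesgue"
  shows "integrable std_gaussian (\<lambda>z. g (z + w)) \<longleftrightarrow>
           integrable std_gaussian (\<lambda>z. g z * exp (w \<bullet> z - (norm w)\<^sup>2 / 2))"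
    and "(\<integral>z. g (z + w) \<partial>std_gaussian) = (\<integral>z. g z * exp (w \<bullet> z - (norm w)\<^sup>2 / 2) \<partial>std_gaussian)"
proof -
  define e where "e z = exp (w \<bullet> z - (norm w)\<^sup>2 / 2)" for z
  have gw[measurable]: "(\<lambda>z. g (z + w)) \<in> borel_measurable lebesgue"
    using borel_measurable_affine[OF g, of 1 w] by (simp add: add.commute)
  have em[measurable]: "e \<in> borel_measurable lebesgue"
    unfolding e_def by (intro cont_meas continuous_intros)
  have gdw[measurable]: "(\<lambda>z. gauss_density (z - w)) \<in> borel_measurable (lebesgue :: 'a measure)"
    by (intro cont_meas continuous_on_compose2[OF gd_cont] continuous_intros) auto
  define k where "k z = gauss_density (z - w) * g z" for z
  have km[measurable]: "k \<in> borel_measurable lebesgue" unfolding k_def by measurable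
  have kshift: "(\<lambda>x. k (w + x)) = (\<lambda>x. gauss_density x * g (x + w))"
    by (simp add: k_def add.commute)
  have kalt: "k = (\<lambda>z. gauss_density z * (g z * e z))"
    using gd_shift by (auto simp: k_def e_def fun_eq_iff)
  have I1: "integrable std_gaussian (\<lambda>z. g (z + w)) \<longleftrightarrow> integrable lebesgue (\<lambda>x. gauss_density x * g (x + w))"
    unfolding std_gaussian_def by (subst integrable_density) (auto simp: gd_nonneg)
  have I2: "integrable std_gaussian (\<lambda>z. g z * e z) \<longleftrightarrow> integrable lebesgue k"
    unfolding std_gaussian_def kalt by (subst integrable_density) (auto simp: gd_nonneg)
  have I3: "integrable lebesgue k \<longleftrightarrow> integrable lebesgue (\<lambda>x. k (w + x))"
    using integrable_distr_eq[OF leb_transl(2)[of w] km] leb_transl(1)[of w] by simp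
  show "integrable std_gaussian (\<lambda>z. g (z + w)) \<longleftrightarrow>
           integrable std_gaussian (\<lambda>z. g z * exp (w \<bullet> z - (norm w)\<^sup>2 / 2))"
    using I1 I2 I3 kshift by (simp add: e_def)
  have E1: "(\<integral>z. g (z + w) \<partial>std_gaussian) = (\<integral>x. gauss_density x * g (x + w) \<partial>lebesgue)"
    unfolding std_gaussian_def by (subst integral_density) (auto simp: gd_nonneg)
  have E2: "(\<integral>z. g z * e z \<partial>std_gaussian) = integral\<^sup>L lebesgue k"
    unfolding std_gaussian_def kalt by (subst integral_density) (auto simp: gd_nonneg)
  have E3: "integral\<^sup>L lebesgue k = (\<integral>x. k (w + x) \<partial>lebesgue)"
    using integral_distr[OF leb_transl(2)[of w] km] leb_transl(1)[of w] by simp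
  show "(\<integral>z. g (z + w) \<partial>std_gaussian) = (\<integral>z. g z * exp (w \<bullet> z - (norm w)\<^sup>2 / 2) \<partial>std_gaussian)"
    using E1 E2 E3 kshift by (simp add: e_def)
qed



lemma exp_bern:
  fixes A x :: real
  assumes A: "1 \<le> A" and x: "0 \<le> x"
  shows "1 + A * (exp x - 1) \<le> exp (A * x)"
proof -
  define \<phi> where "\<phi> y = exp (A * y) - A * exp y" for y
  have "\<phi> 0 \<le> \<phi> x"
  proof (rule DERIV_nonneg_imp_increasing_open[OF x])
    fix y :: real assume y: "0 < y" "y < x"
    have "DERIV \<phi> y :> A * exp (A * y) - A * exp y"
      unfolding \<phi>_def by (auto intro!: derivative_eq_intros)
    moreover have "exp y \<le> exp (A * y)" using A y by simp
    then have "0 \<le> A * exp (A * y) - A * exp y" using A by (simp add: algebra_simps mult_left_mono)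
    ultimately show "\<exists>d. DERIV \<phi> y :> d \<and> 0 \<le> d" by blast
  next
    show "continuous_on {0..x} \<phi>" unfolding \<phi>_def by (intro continuous_intros)
  qed
  then show ?thesis unfolding \<phi>_def by (simp add: algebra_simps)
qed

lemma meas_sg: "h \<in> borel_measurable lebesgue \<Longrightarrow> h \<in> borel_measurable std_gaussian"
  by (simp add: std_gaussian_def)

lemma space_sg[simp]: "space std_gaussian = UNIV"
  by (simp add: std_gaussian_def)

lemma CM2:
  fixes g :: "'a::euclidean_space \<Rightarrow> real"
  assumes int1: "integrable (std_gaussian :: 'a measure) (\<lambda>_. 1::real)"
    and gm[measurable]: "g \<in> borel_measurable lebesgue" and gb: "\<And>z. \<bar>g z\<bar> \<le> K"
  shows "integrable std_gaussian (\<lambda>z. g z * exp (w \<bullet> z))"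
    and "(\<integral>z. g (z + w) \<partial>std_gaussian) = exp (- (norm w)\<^sup>2 / 2) * (\<integral>z. g z * exp (w \<bullet> z) \<partial>std_gaussian)"
proof -
  have gw: "(\<lambda>z. g (z + w)) \<in> borel_measurable lebesgue"
    using borel_measurable_affine[OF gm, of 1 w] by (simp add: add.commute)
  have "integrable std_gaussian (\<lambda>z::'a. K * 1)"
    using int1 by (intro integrable_mult_right) auto
  then have "integrable std_gaussian (\<lambda>z. g (z + w))"
  proof (rule Bochner_Integration.integrable_bound)
    show "(\<lambda>z. g (z + w)) \<in> borel_measurable std_gaussian" using gw by (rule meas_sg)
    show "AE z in std_gaussian. norm (g (z + w)) \<le> norm (K * 1)"
    proof (intro always_eventually allI)
      fix z
      have "\<bar>g (z + w)\<bar> \<le> K" by (rule gb)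
      then show "norm (g (z + w)) \<le> norm (K * 1)" by simp
    qed
  qed
  then have i2: "integrable std_gaussian (\<lambda>z. g z * exp (w \<bullet> z - (norm w)\<^sup>2 / 2))"
    using CM(1)[OF gm, of w] by simp
  have eq: "(\<lambda>z. g z * exp (w \<bullet> z)) = (\<lambda>z. exp ((norm w)\<^sup>2 / 2) * (g z * exp (w \<bullet> z - (norm w)\<^sup>2 / 2)))"
    by (auto simp: fun_eq_iff exp_diff)
  show "integrable std_gaussian (\<lambda>z. g z * exp (w \<bullet> z))"
    unfolding eq using i2 by (intro integrable_mult_right) auto
  have eq2: "(\<lambda>z. g z * exp (w \<bullet> z - (norm w)\<^sup>2 / 2)) = (\<lambda>z. exp (- (norm w)\<^sup>2 / 2) * (g z * exp (w \<bullet> z)))"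
  proof -
    have "exp (w \<bullet> z - (norm w)\<^sup>2 / 2) = exp (- (norm w)\<^sup>2 / 2) * exp (w \<bullet> z)" for z
      by (subst exp_add[symmetric]) simp
    then show ?thesis by (auto simp: fun_eq_iff)
  qed
  show "(\<integral>z. g (z + w) \<partial>std_gaussian) = exp (- (norm w)\<^sup>2 / 2) * (\<integral>z. g z * exp (w \<bullet> z) \<partial>std_gaussian)"
    using CM(2)[OF gm, of w] unfolding eq2 by simp
qed

lemma exp_int:
  fixes w :: "'a::euclidean_space"
  assumes int1: "integrable (std_gaussian :: 'a measure) (\<lambda>_. 1::real)"
  shows "integrable std_gaussian (\<lambda>z. exp (w \<bullet> z))"
    and "(\<integral>z. exp (w \<bullet> z) \<partial>std_gaussian) = measure (std_gaussian :: 'a measure) UNIV * exp ((norm w)\<^sup>2 / 2)"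
proof -
  have m: "(\<lambda>_. 1::real) \<in> borel_measurable (lebesgue :: 'a measure)" by simp
  show "integrable std_gaussian (\<lambda>z. exp (w \<bullet> z))"
    using CM2(1)[OF int1 m, of 1 w] by simp
  have "measure (std_gaussian :: 'a measure) UNIV = exp (- (norm w)\<^sup>2 / 2) * (\<integral>z. exp (w \<bullet> z) \<partial>std_gaussian)"
    using CM2(2)[OF int1 m, of 1 w] by simp
  then show "(\<integral>z. exp (w \<bullet> z) \<partial>std_gaussian) = measure (std_gaussian :: 'a measure) UNIV * exp ((norm w)\<^sup>2 / 2)"
    by (simp add: exp_minus field_simps)
qed



theorem lemma9:
  fixes V :: "'a::euclidean_space \<Rightarrow> real" and c :: real
  assumes "V \<in> borel_measurable lebesgue"
    and "0 \<le> c"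
    and "\<forall>x y. V x - V y \<le> c"
    and "(\<integral>x. exp (- V x) \<partial>std_gaussian) = 1"
  shows "\<forall>t>0. neg_log_concave (exp c / (exp (2 * t) - 1)) (OU t (\<lambda>x. exp (- V x)))"
proof (intro allI impI)
  fix t :: real assume t: "0 < t"
  define f where "f z = exp (- V z)" for z
  define a where "a = exp (- t)"
  define s where "s = sqrt (1 - exp (- 2 * t))"
  define lam where "lam = exp c / (exp (2 * t) - 1)"
  define F where "F = OU t (\<lambda>x. exp (- V x))"
  have Vm[measurable]: "V \<in> borel_measurable lebesgue" using assms(1) .
  have fm[measurable]: "f \<in> borel_measurable lebesgue" unfolding f_def[abs_def] by measurable
  have fpos: "0 < f z" for z unfolding f_def by simp
  have fle: "f p \<le> exp c * f q" for p q
  proof -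
    have "- V p \<le> c + - V q" using assms(3) by (smt (verit))
    then have "exp (- V p) \<le> exp (c + - V q)" by simp
    moreover have e: "exp c * exp (- V q) = exp (c + - V q)" by (rule exp_add[symmetric])
    ultimately show ?thesis unfolding f_def by simp
  qed
  have e2t: "exp (- 2 * t) < 1" using t by simp
  have spos: "0 < s" unfolding s_def using e2t by simp
  have lampos: "0 < lam" unfolding lam_def using t by simp
  have Fdef: "F x = (\<integral>z. f (a *\<^sub>R x + s *\<^sub>R z) \<partial>std_gaussian)" for x
    unfolding F_def OU_def f_def a_def s_def by simp
  have intf: "integrable std_gaussian f"
  proof (rule ccontr)
    assume "\<not> integrable std_gaussian f"
    then have "integral\<^sup>L std_gaussian f = 0" by (rule not_integrable_integral_eq)
    with assms(4) show False unfolding f_def[abs_def] by simp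
  qed
  have int1: "integrable (std_gaussian :: 'a measure) (\<lambda>_. 1::real)"
  proof -
    have "integrable std_gaussian (\<lambda>z. (exp c / f 0) * f z)"
      using intf by (intro integrable_mult_right) auto
    then show ?thesis
    proof (rule Bochner_Integration.integrable_bound)
      show "(\<lambda>_. 1::real) \<in> borel_measurable std_gaussian" by simp
      show "AE x in std_gaussian. norm (1::real) \<le> norm (exp c / f 0 * f x)"
      proof (intro always_eventually allI)
        fix z
        have "f 0 \<le> exp c * f z" by (rule fle)
        then have "1 \<le> exp c / f 0 * f z" using fpos[of 0] by (simp add: field_simps)
        then show "norm (1::real) \<le> norm (exp c / f 0 * f z)" using fpos[of 0] fpos[of z] by simp
      qed
    qed
  qed
  have intK: "integrable (std_gaussian :: 'a measure) (\<lambda>_. K)" for K :: real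
    using integrable_mult_right[of K std_gaussian "\<lambda>_. 1::real"] int1 by simp
  define \<Gamma> where "\<Gamma> = measure (std_gaussian :: 'a measure) UNIV"
  have int_const: "(\<integral>z. K \<partial>(std_gaussian :: 'a measure)) = \<Gamma> * K" for K :: real
    by (simp add: \<Gamma>_def)
  have \<Gamma>pos: "0 < \<Gamma>"
  proof -
    have "1 = (\<integral>z. f z \<partial>std_gaussian)" using assms(4) unfolding f_def by simp
    also have "\<dots> \<le> (\<integral>z. exp c * f 0 \<partial>(std_gaussian :: 'a measure))"
      by (rule Bochner_Integration.integral_mono[OF intf intK]) (auto intro: fle)
    also have "\<dots> = \<Gamma> * (exp c * f 0)" by (rule int_const)
    finally have "0 < \<Gamma> * (exp c * f 0)" by simp
    moreover have "0 < exp c * f 0" using fpos by simp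
    ultimately show ?thesis by (simp add: zero_less_mult_iff)
  qed
  have gm: "(\<lambda>z. f (a *\<^sub>R x + s *\<^sub>R z)) \<in> borel_measurable lebesgue" for x
    using borel_measurable_affine[OF fm, of s "a *\<^sub>R x"] spos by simp
  have gb: "\<bar>f (a *\<^sub>R x + s *\<^sub>R z)\<bar> \<le> exp c * f 0" for x z
    using fle fpos by (simp add: less_imp_le)
  have intg: "integrable std_gaussian (\<lambda>z. f (a *\<^sub>R x + s *\<^sub>R z))" for x
    using intK[of "exp c * f 0"]
  proof (rule Bochner_Integration.integrable_bound)
    show "(\<lambda>z. f (a *\<^sub>R x + s *\<^sub>R z)) \<in> borel_measurable std_gaussian" using gm by (rule meas_sg)
    show "AE z in std_gaussian. norm (f (a *\<^sub>R x + s *\<^sub>R z)) \<le> norm (exp c * f 0)"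
      using gb fpos by (intro always_eventually allI) (simp add: less_imp_le)
  qed
  have Flow: "exp (- c) * f p * \<Gamma> \<le> F x" for x p
  proof -
    have "exp (- c) * f p * \<Gamma> = (\<integral>z. exp (- c) * f p \<partial>(std_gaussian :: 'a measure))" by (simp add: \<Gamma>_def)
    also have "\<dots> \<le> (\<integral>z. f (a *\<^sub>R x + s *\<^sub>R z) \<partial>std_gaussian)"
    proof (intro Bochner_Integration.integral_mono intg intK)
      fix z
      have "f p \<le> exp c * f (a *\<^sub>R x + s *\<^sub>R z)" by (rule fle)
      then show "exp (- c) * f p \<le> f (a *\<^sub>R x + s *\<^sub>R z)" by (simp add: exp_minus field_simps)
    qed
    finally show ?thesis by (simp add: Fdef)
  qed
  have Fpos: "0 < F x" for x
    using Flow[of 0 x] \<Gamma>pos fpos[of 0] by (smt (verit) exp_gt_zero mult_pos_pos)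
  have gup: "f (a *\<^sub>R x + s *\<^sub>R z) \<le> exp c * F x / \<Gamma>" for x z
  proof -
    have "exp (- c) * f (a *\<^sub>R x + s *\<^sub>R z) * \<Gamma> \<le> F x" by (rule Flow)
    then show ?thesis using \<Gamma>pos by (simp add: exp_minus field_simps)
  qed
  have as2: "(a / s)\<^sup>2 = 1 / (exp (2 * t) - 1)"
  proof -
    have "a\<^sup>2 = exp (- 2 * t)" unfolding a_def by (simp add: power2_eq_square exp_add[symmetric])
    moreover have "s\<^sup>2 = 1 - exp (- 2 * t)" unfolding s_def using e2t by simp
    moreover have "exp (- 2 * t) * exp (2 * t) = 1" by (simp add: exp_add[symmetric])
    ultimately show ?thesis using e2t t spos by (simp add: power_divide field_simps)
  qed
  have midF: "F (x + h) * F (x - h) \<le> (F x)\<^sup>2 * exp (lam * (norm h)\<^sup>2)" for x h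
  proof -
    define g where "g z = f (a *\<^sub>R x + s *\<^sub>R z)" for z
    define w where "w = (a / s) *\<^sub>R h"
    define K where "K = exp c * F x / \<Gamma>"
    define E where "E = exp ((norm w)\<^sup>2 / 2)"
    have gm'[measurable]: "g \<in> borel_measurable lebesgue" unfolding g_def[abs_def] by (rule gm)
    have gb': "\<bar>g z\<bar> \<le> exp c * f 0" for z unfolding g_def by (rule gb)
    have gnn: "0 \<le> g z" for z unfolding g_def using fpos by (simp add: less_imp_le)
    have gK: "g z \<le> K" for z unfolding g_def K_def by (rule gup)
    have intg': "integrable std_gaussian g" unfolding g_def[abs_def] by (rule intg)
    have sw: "s *\<^sub>R w = a *\<^sub>R h" using spos by (simp add: w_def)
    have Fp: "F (x + h) = (\<integral>z. g (z + w) \<partial>std_gaussian)"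
    proof -
      have "a *\<^sub>R (x + h) + s *\<^sub>R z = a *\<^sub>R x + s *\<^sub>R (z + w)" for z
        using sw by (simp add: algebra_simps)
      then show ?thesis unfolding Fdef g_def by simp
    qed
    have Fm: "F (x - h) = (\<integral>z. g (z + (- w)) \<partial>std_gaussian)"
    proof -
      have "a *\<^sub>R (x - h) + s *\<^sub>R z = a *\<^sub>R x + s *\<^sub>R (z + - w)" for z
        using sw by (simp add: algebra_simps)
      then show ?thesis unfolding Fdef g_def by simp
    qed
    define Ip where "Ip = (\<integral>z. g z * exp (w \<bullet> z) \<partial>std_gaussian)"
    define Im where "Im = (\<integral>z. g z * exp ((- w) \<bullet> z) \<partial>std_gaussian)"
    have I0: "F x = (\<integral>z. g z \<partial>std_gaussian)" unfolding Fdef g_def ..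
    have Fp': "F (x + h) = exp (- (norm w)\<^sup>2 / 2) * Ip"
      unfolding Fp Ip_def by (rule CM2(2)[OF int1 gm' gb'])
    have Fm': "F (x - h) = exp (- (norm w)\<^sup>2 / 2) * Im"
      unfolding Fm Im_def using CM2(2)[OF int1 gm' gb', of "- w"] by simp
    have intp: "integrable std_gaussian (\<lambda>z. g z * exp (w \<bullet> z))" by (rule CM2(1)[OF int1 gm' gb'])
    have intm: "integrable std_gaussian (\<lambda>z. g z * exp ((- w) \<bullet> z))" by (rule CM2(1)[OF int1 gm' gb'])
    have iep: "integrable std_gaussian (\<lambda>z. exp (w \<bullet> z))" by (rule exp_int(1)[OF int1])
    have iem: "integrable std_gaussian (\<lambda>z. exp ((- w) \<bullet> z))" by (rule exp_int(1)[OF int1])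
    have vep: "(\<integral>z. exp (w \<bullet> z) \<partial>std_gaussian) = \<Gamma> * E"
      unfolding \<Gamma>_def E_def by (rule exp_int(2)[OF int1])
    have vem: "(\<integral>z. exp ((- w) \<bullet> z) \<partial>std_gaussian) = \<Gamma> * E"
      unfolding \<Gamma>_def E_def using exp_int(2)[OF int1, of "- w"] by simp
    have vem': "(\<integral>z. exp (- (w \<bullet> z)) \<partial>std_gaussian) = \<Gamma> * E" using vem by simp
    have Ipnn: "0 \<le> Ip" unfolding Ip_def
      by (intro Bochner_Integration.integral_nonneg) (simp add: gnn)
    have Imnn: "0 \<le> Im" unfolding Im_def
      by (intro Bochner_Integration.integral_nonneg) (simp add: gnn)
    have pw: "g z * exp (w \<bullet> z) + g z * exp ((- w) \<bullet> z)
        \<le> 2 * g z + (K * exp (w \<bullet> z) + K * exp ((- w) \<bullet> z) - 2 * K)" for z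
    proof -
      have ch: "2 \<le> exp (w \<bullet> z) + exp ((- w) \<bullet> z)"
      proof -
        define u where "u = exp (w \<bullet> z)"
        have u: "0 < u" unfolding u_def by simp
        have e: "exp ((- w) \<bullet> z) = 1 / u" unfolding u_def by (simp add: exp_minus inverse_eq_divide)
        have "0 \<le> (u - 1)\<^sup>2" by simp
        then have "2 * u \<le> u * u + 1" by (simp add: power2_eq_square algebra_simps)
        then have "2 \<le> (u * u + 1) / u" using u by (simp add: pos_le_divide_eq)
        also have "(u * u + 1) / u = u + 1 / u" using u by (simp add: field_simps)
        finally show ?thesis unfolding e u_def .
      qed
      have "(g z - K) * (exp (w \<bullet> z) + exp ((- w) \<bullet> z) - 2) \<le> 0"
        using gK[of z] ch by (intro mult_nonpos_nonneg) auto
      then show ?thesis by (simp add: algebra_simps)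
    qed
    have "Ip + Im = (\<integral>z. g z * exp (w \<bullet> z) + g z * exp ((- w) \<bullet> z) \<partial>std_gaussian)"
      unfolding Ip_def Im_def by (rule Bochner_Integration.integral_add[OF intp intm, symmetric])
    also have "\<dots> \<le> (\<integral>z. 2 * g z + (K * exp (w \<bullet> z) + K * exp ((- w) \<bullet> z) - 2 * K) \<partial>std_gaussian)"
      by (rule Bochner_Integration.integral_mono) (use intp intm intg' iep iem intK pw in auto)
    also have "\<dots> = 2 * F x + (K * (\<Gamma> * E) + K * (\<Gamma> * E) - 2 * K * \<Gamma>)"
      using intg' iep iem intK
      by (simp add: Bochner_Integration.integral_add Bochner_Integration.integral_diff
           vep vem vem' I0 int_const \<Gamma>_def[symmetric])
    finally have "Ip + Im \<le> 2 * F x + (K * (\<Gamma> * E) + K * (\<Gamma> * E) - 2 * K * \<Gamma>)" .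
    then have IpIm: "(Ip + Im) / 2 \<le> F x * (1 + exp c * (E - 1))"
      unfolding K_def using \<Gamma>pos by (simp add: field_simps)
    have bern: "1 + exp c * (E - 1) \<le> exp (exp c * ((norm w)\<^sup>2 / 2))"
      unfolding E_def using assms(2) by (intro exp_bern) auto
    have "(Ip + Im) / 2 \<le> F x * exp (exp c * ((norm w)\<^sup>2 / 2))"
      using IpIm mult_left_mono[OF bern less_imp_le[OF Fpos[of x]]] by linarith
    then have sq: "((Ip + Im) / 2)\<^sup>2 \<le> (F x * exp (exp c * ((norm w)\<^sup>2 / 2)))\<^sup>2"
      using Ipnn Imnn by (intro power_mono) auto
    have amgm: "Ip * Im \<le> ((Ip + Im) / 2)\<^sup>2"
    proof -
      have "0 \<le> (Ip - Im)\<^sup>2" by simp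
      then show ?thesis by (simp add: power2_eq_square field_simps)
    qed
    have "F (x + h) * F (x - h) = exp (- (norm w)\<^sup>2 / 2) * exp (- (norm w)\<^sup>2 / 2) * (Ip * Im)"
      unfolding Fp' Fm' by (simp add: algebra_simps)
    also have "\<dots> \<le> exp (- (norm w)\<^sup>2 / 2) * exp (- (norm w)\<^sup>2 / 2) * (F x * exp (exp c * ((norm w)\<^sup>2 / 2)))\<^sup>2"
      using order_trans[OF amgm sq] by (intro mult_left_mono) auto
    also have "\<dots> = (F x)\<^sup>2 * exp ((exp c - 1) * (norm w)\<^sup>2)"
      by (simp add: power2_eq_square exp_add[symmetric] algebra_simps)
    also have "\<dots> \<le> (F x)\<^sup>2 * exp (lam * (norm h)\<^sup>2)"
    proof -
      have nw: "(norm w)\<^sup>2 = (norm h)\<^sup>2 / (exp (2 * t) - 1)"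
      proof -
        have "(norm w)\<^sup>2 = (a / s)\<^sup>2 * (norm h)\<^sup>2"
          unfolding w_def by (simp only: norm_scaleR power_mult_distrib power2_abs)
        then show ?thesis using as2 by simp
      qed
      have "(exp c - 1) * (norm w)\<^sup>2 \<le> exp c * (norm w)\<^sup>2" by (simp add: algebra_simps)
      also have "\<dots> = lam * (norm h)\<^sup>2" unfolding nw lam_def by simp
      finally show ?thesis by (intro mult_left_mono) auto
    qed
    finally show ?thesis .
  qed
  define G where "G x = ln (F x) - lam * (norm x)\<^sup>2 / 2" for x
  have Gmid: "G (x + h) + G (x - h) \<le> 2 * G x" for x h
  proof -
    have "ln (F (x + h)) + ln (F (x - h)) = ln (F (x + h) * F (x - h))"
      using Fpos[of "x + h"] Fpos[of "x - h"] by (simp add: ln_mult)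
    also have "\<dots> \<le> ln ((F x)\<^sup>2 * exp (lam * (norm h)\<^sup>2))"
      using midF[of x h] Fpos[of "x + h"] Fpos[of "x - h"] Fpos[of x]
      by (subst ln_le_cancel_iff) (auto intro: mult_pos_pos)
    also have "\<dots> = 2 * ln (F x) + lam * (norm h)\<^sup>2"
      using Fpos[of x] by (simp add: ln_mult ln_realpow)
    finally have 1: "ln (F (x + h)) + ln (F (x - h)) \<le> 2 * ln (F x) + lam * (norm h)\<^sup>2" .
    have 2: "(norm (x + h))\<^sup>2 + (norm (x - h))\<^sup>2 = 2 * (norm x)\<^sup>2 + 2 * (norm h)\<^sup>2"
      unfolding power2_norm_eq_inner by (simp add: inner_add_left inner_add_right inner_diff_left inner_diff_right inner_commute)
    have 3: "lam * (norm (x + h))\<^sup>2 + lam * (norm (x - h))\<^sup>2 = 2 * (lam * (norm x)\<^sup>2) + 2 * (lam * (norm h)\<^sup>2)"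
      using arg_cong[OF 2, of "\<lambda>u. lam * u"] by (simp add: algebra_simps)
    show ?thesis unfolding G_def using 1 3 by (simp add: field_simps)
  qed
  have Glb: "ln (exp (- c) * f 0 * \<Gamma>) - (lam / 2) * (norm x)\<^sup>2 \<le> G x" for x
  proof -
    have "ln (exp (- c) * f 0 * \<Gamma>) \<le> ln (F x)"
      using Flow[of 0 x] \<Gamma>pos fpos[of 0] Fpos[of x] by (subst ln_le_cancel_iff) (auto intro: mult_pos_pos)
    then show ?thesis unfolding G_def by simp
  qed
  have "concave_on UNIV G"
    by (rule mid_concave[OF Gmid Glb]) (use lampos in simp)
  then have "neg_log_concave lam F"
    unfolding neg_log_concave_def G_def[abs_def] using Fpos by simp
  then show "neg_log_concave (exp c / (exp (2 * t) - 1)) (OU t (\<lambda>x. exp (- V x)))"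
    unfolding lam_def F_def .
qed

end
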